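(* Let $p$ be a prime, $d$ a positive integer, and $\alpha>1-\frac{1}{d}\left(1-\frac{1}{p}\right)$. Let $S\subseteq\{1,2,\dots,p\}$ with $|S|\ge\alpha p$, and let $A=S+p\mathbb{Z}=\{s+pn : s\in S,\ n\in\mathbb{Z}\}$. Then \[h(A^d)\le |S|^d.\]
   Context: For a set $X\subseteq\mathbb{R}^d$, the Helly number $h(X)$ is the smallest $h$ such that the following holds: for every finite family $\mathcal{F}$ of convex sets in $\mathbb{R}^d$, if every $h$ or fewer sets of $\mathcal{F}$ have a point of $X$ in their intersection, then the intersection of all sets of $\mathcal{F}$ contains a point of $X$. If no such $h$ exists, $h(X)=\infty$. $A^d$ denotes the $d$-fold Cartesian product of $A$. *)

theory Defs
  imports "HOL-Analysis.Analysis" "HOL-Library.Extended_Nat"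
begin

definition helly_prop :: "'a::real_vector set \<Rightarrow> nat \<Rightarrow> bool" where
  "helly_prop X h \<longleftrightarrow>
     (\<forall>F. finite F \<and> (\<forall>C\<in>F. convex C) \<longrightarrow>
        (\<forall>G. G \<subseteq> F \<and> card G \<le> h \<longrightarrow> \<Inter>G \<inter> X \<noteq> {}) \<longrightarrow> \<Inter>F \<inter> X \<noteq> {})"

definition helly_number :: "'a::real_vector set \<Rightarrow> enat" where
  "helly_number X = (INF h \<in> {h. helly_prop X h}. enat h)"

text \<open>d-fold Cartesian power of a set of reals, inside real^'n with d = CARD('n).\<close>
definition cart_power :: "real set \<Rightarrow> (real^'n) set" where
  "cart_power A = {x. \<forall>i. x $ i \<in> A}"

end

theory Submission imports Defs begin


lemma finite_argmax:
  fixes f :: "'a \<Rightarrow> real"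
  assumes "finite A" "A \<noteq> {}"
  shows "\<exists>x\<in>A. \<forall>y\<in>A. f y \<le> f x"
proof -
  have "Max (f ` A) \<in> f ` A" using assms by simp
  then obtain x where "x \<in> A" "f x = Max (f ` A)" by auto
  then show ?thesis using assms by (metis Max_ge finite_imageI imageI)
qed

lemma finite_argmin:
  fixes f :: "'a \<Rightarrow> real"
  assumes "finite A" "A \<noteq> {}"
  shows "\<exists>x\<in>A. \<forall>y\<in>A. f x \<le> f y"
  using finite_argmax[OF assms, of "\<lambda>x. - f x"] by auto

lemma bell:
  fixes a :: "'i \<Rightarrow> 'a::real_inner" and c :: "'i \<Rightarrow> real" and T :: "'a set"
  assumes fT: "finite T" and fJ: "finite J" and kJ: "k < card J"
   and hprop: "\<And>i. i \<in> J \<Longrightarrow> \<exists>t\<in>T. \<forall>j\<in>J-{i}. a j \<bullet> t < c j"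
   and Q: "\<And>Z. Z \<subseteq> T \<Longrightarrow> k < card Z \<Longrightarrow> \<exists>z1\<in>Z. \<exists>z2\<in>Z. z1 \<noteq> z2 \<and>
            (\<exists>\<theta>. 0 < \<theta> \<and> \<theta> < 1 \<and> (1 - \<theta>) *\<^sub>R z1 + \<theta> *\<^sub>R z2 \<in> T)"
  shows "\<exists>t\<in>T. \<forall>j\<in>J. a j \<bullet> t < c j"
proof (rule ccontr)
  assume nosol: "\<not> ?thesis"
  define sol where "sol e \<longleftrightarrow> (\<exists>t\<in>T. \<forall>j\<in>J. a j \<bullet> t < e j)" for e
  define \<Omega> where "\<Omega> = {e \<in> PiE J (\<lambda>j. insert (c j) ((\<lambda>t. a j \<bullet> t) ` T)).
                        (\<forall>j\<in>J. c j \<le> e j) \<and> \<not> sol e}"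
  have fO: "finite \<Omega>" unfolding \<Omega>_def
    by (rule finite_subset[OF _ finite_PiE[OF fJ, of "\<lambda>j. insert (c j) ((\<lambda>t. a j \<bullet> t) ` T)"]]) (auto simp: fT)
  have "restrict c J \<in> \<Omega>" using nosol unfolding \<Omega>_def sol_def by auto
  then have "\<Omega> \<noteq> {}" by auto
  from finite_argmax[OF fO this, of "\<lambda>e. sum e J"]
  obtain e where eO: "e \<in> \<Omega>" and emax: "\<And>e'. e' \<in> \<Omega> \<Longrightarrow> sum e' J \<le> sum e J" by auto
  have ePi: "e \<in> PiE J (\<lambda>j. insert (c j) ((\<lambda>t. a j \<bullet> t) ` T))"
    and ec: "\<And>j. j \<in> J \<Longrightarrow> c j \<le> e j" and ens: "\<not> sol e" using eO unfolding \<Omega>_def by auto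
  have "\<exists>z\<in>T. (\<forall>j\<in>J-{i}. a j \<bullet> z < e j) \<and> a i \<bullet> z = e i" if iJ: "i \<in> J" for i
  proof -
    define Si where "Si = {t\<in>T. \<forall>j\<in>J-{i}. a j \<bullet> t < e j}"
    have "Si \<noteq> {}"
    proof -
      obtain t where t: "t \<in> T" "\<forall>j\<in>J-{i}. a j \<bullet> t < c j" using hprop[OF iJ] by blast
      then have "\<forall>j\<in>J-{i}. a j \<bullet> t < e j" using ec by (meson DiffD1 less_le_trans)
      then show ?thesis using t(1) unfolding Si_def by blast
    qed
    moreover have "finite Si" using fT unfolding Si_def by auto
    ultimately obtain m where mS: "m \<in> Si" and mmin: "\<And>t. t \<in> Si \<Longrightarrow> a i \<bullet> m \<le> a i \<bullet> t"
      using finite_argmin[of Si "\<lambda>t. a i \<bullet> t"] by auto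
    have m1: "m \<in> T" "\<forall>j\<in>J-{i}. a j \<bullet> m < e j" using mS unfolding Si_def by auto
    have ge: "e i \<le> a i \<bullet> m"
    proof (rule ccontr)
      assume "\<not> ?thesis"
      then have "\<forall>j\<in>J. a j \<bullet> m < e j" using m1 by auto
      then show False using ens m1 unfolding sol_def by auto
    qed
    have "\<not> e i < a i \<bullet> m"
    proof
      assume lt: "e i < a i \<bullet> m"
      define e2 where "e2 = e(i := a i \<bullet> m)"
      have "e2 \<in> \<Omega>"
      proof -
        have "e2 \<in> PiE J (\<lambda>j. insert (c j) ((\<lambda>t. a j \<bullet> t) ` T))"
          using ePi iJ m1(1) unfolding e2_def by (auto simp: PiE_def Pi_def extensional_def)
        moreover have "\<forall>j\<in>J. c j \<le> e2 j" using ec ge unfolding e2_def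
          by (metis fun_upd_apply iJ order_trans)
        moreover have "\<not> sol e2"
        proof
          assume "sol e2"
          then obtain t where t: "t \<in> T" "\<forall>j\<in>J. a j \<bullet> t < e2 j" unfolding sol_def by auto
          have "\<forall>j\<in>J-{i}. a j \<bullet> t < e j"
          proof
            fix j assume "j \<in> J-{i}"
            then show "a j \<bullet> t < e j" using t(2) unfolding e2_def by (metis DiffD1 DiffD2 fun_upd_other singletonI)
          qed
          then have "t \<in> Si" unfolding Si_def using t(1) by blast
          then have "a i \<bullet> m \<le> a i \<bullet> t" by (rule mmin)
          moreover have "a i \<bullet> t < a i \<bullet> m" using t(2) iJ unfolding e2_def by auto
          ultimately show False by simp
        qed
        ultimately show ?thesis unfolding \<Omega>_def by auto
      qed
      then have "sum e2 J \<le> sum e J" by (rule emax)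
      moreover have "sum e2 J = e2 i + sum e2 (J - {i})" by (rule sum.remove[OF fJ iJ])
      moreover have "sum e J = e i + sum e (J - {i})" by (rule sum.remove[OF fJ iJ])
      moreover have "sum e2 (J - {i}) = sum e (J - {i})" unfolding e2_def by (rule sum.cong) auto
      ultimately show False using lt unfolding e2_def by simp
    qed
    then show ?thesis using ge m1 by (intro bexI[of _ m]) auto
  qed
  then obtain z where zT: "\<And>i. i \<in> J \<Longrightarrow> z i \<in> T"
    and zlt: "\<And>i j. i \<in> J \<Longrightarrow> j \<in> J \<Longrightarrow> j \<noteq> i \<Longrightarrow> a j \<bullet> z i < e j"
    and zeq: "\<And>i. i \<in> J \<Longrightarrow> a i \<bullet> z i = e i"
    by (metis (mono_tags) Diff_iff singletonD)
  have inj: "inj_on z J"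
  proof (rule inj_onI)
    fix i j assume ij: "i \<in> J" "j \<in> J" "z i = z j"
    show "i = j"
    proof (rule ccontr)
      assume "i \<noteq> j"
      then have "a i \<bullet> z j < e i" using zlt ij by auto
      then show False using zeq[of i] ij by simp
    qed
  qed
  have "z ` J \<subseteq> T" using zT by auto
  moreover have "k < card (z ` J)" using card_image[OF inj] kJ by simp
  ultimately obtain z1 z2 \<theta> where z12: "z1 \<in> z ` J" "z2 \<in> z ` J" "z1 \<noteq> z2"
     and th: "0 < \<theta>" "\<theta> < 1" "(1 - \<theta>) *\<^sub>R z1 + \<theta> *\<^sub>R z2 \<in> T"
    using Q by blast
  from z12 obtain i1 i2 where i12: "i1 \<in> J" "i2 \<in> J" "z1 = z i1" "z2 = z i2" "i1 \<noteq> i2" by auto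
  define w where "w = (1 - \<theta>) *\<^sub>R z1 + \<theta> *\<^sub>R z2"
  have "a l \<bullet> w < e l" if lJ: "l \<in> J" for l
  proof -
    have eqw: "a l \<bullet> w = (1 - \<theta>) * (a l \<bullet> z1) + \<theta> * (a l \<bullet> z2)"
      unfolding w_def by (simp add: inner_add_right)
    have le1: "a l \<bullet> z1 \<le> e l" using zlt zeq i12 lJ by (metis order_le_less)
    have le2: "a l \<bullet> z2 \<le> e l" using zlt zeq i12 lJ by (metis order_le_less)
    have "a l \<bullet> z1 < e l \<or> a l \<bullet> z2 < e l" using zlt i12 lJ by metis
    then show ?thesis
    proof
      assume s1: "a l \<bullet> z1 < e l"
      have "(1 - \<theta>) * (a l \<bullet> z1) < (1 - \<theta>) * e l" using s1 th by simp
      moreover have "\<theta> * (a l \<bullet> z2) \<le> \<theta> * e l" using le2 th by simp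
      ultimately show ?thesis using eqw by (simp add: algebra_simps)
    next
      assume s2: "a l \<bullet> z2 < e l"
      have "(1 - \<theta>) * (a l \<bullet> z1) \<le> (1 - \<theta>) * e l" using le1 th by simp
      moreover have "\<theta> * (a l \<bullet> z2) < \<theta> * e l" using s2 th by simp
      ultimately show ?thesis using eqw by (simp add: algebra_simps)
    qed
  qed
  then have "sol e" using th(3) unfolding sol_def w_def by auto
  then show False using ens by simp
qed

lemma bell2:
  fixes a :: "'i \<Rightarrow> 'a::real_inner" and c :: "'i \<Rightarrow> real" and T :: "'a set"
  assumes fT: "finite T" and fI: "finite I"
   and small: "\<And>U. U \<subseteq> I \<Longrightarrow> card U \<le> k \<Longrightarrow> \<exists>t\<in>T. \<forall>j\<in>U. a j \<bullet> t < c j"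
   and Q: "\<And>Z. Z \<subseteq> T \<Longrightarrow> k < card Z \<Longrightarrow> \<exists>z1\<in>Z. \<exists>z2\<in>Z. z1 \<noteq> z2 \<and>
            (\<exists>\<theta>. 0 < \<theta> \<and> \<theta> < 1 \<and> (1 - \<theta>) *\<^sub>R z1 + \<theta> *\<^sub>R z2 \<in> T)"
  shows "\<exists>t\<in>T. \<forall>j\<in>I. a j \<bullet> t < c j"
proof (rule ccontr)
  assume nI: "\<not> ?thesis"
  define bad where "bad U \<longleftrightarrow> U \<subseteq> I \<and> \<not> (\<exists>t\<in>T. \<forall>j\<in>U. a j \<bullet> t < c j)" for U
  have "bad I" using nI unfolding bad_def by auto
  define n where "n = (LEAST n. \<exists>U. bad U \<and> card U = n)"
  have "\<exists>U. bad U \<and> card U = n" unfolding n_def by (rule LeastI_ex) (use \<open>bad I\<close> in blast)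
  then obtain J where bJ: "bad J" and cJ: "card J = n" by blast
  have minJ: "\<not> bad U" if "card U < n" for U
    using not_less_Least[OF that[unfolded n_def]] by blast
  have JI: "J \<subseteq> I" using bJ unfolding bad_def by auto
  then have fJ: "finite J" using fI finite_subset by blast
  have kJ: "k < card J"
  proof (rule ccontr)
    assume "\<not> k < card J"
    then have "\<exists>t\<in>T. \<forall>j\<in>J. a j \<bullet> t < c j" using small[OF JI] by simp
    then show False using bJ unfolding bad_def by auto
  qed
  have "\<exists>t\<in>T. \<forall>j\<in>J-{i}. a j \<bullet> t < c j" if iJ: "i \<in> J" for i
  proof -
    have "card (J - {i}) < n" using cJ fJ iJ card_gt_0_iff[of J] by auto
    then have "\<not> bad (J - {i})" by (rule minJ)
    then show ?thesis using JI unfolding bad_def by auto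
  qed
  from bell[OF fT fJ kJ this Q] show False using bJ unfolding bad_def by auto
qed



lemma mod_inj_S:
  fixes p :: nat and S :: "int set"
  assumes p: "p > 0" and S: "S \<subseteq> {1..int p}"
  shows "inj_on (\<lambda>s. s mod int p) S"
proof (rule inj_onI)
  fix x y assume xy: "x \<in> S" "y \<in> S" "x mod int p = y mod int p"
  have m: "s mod int p = (if s = int p then 0 else s)" if "s \<in> S" for s
    using S that by auto
  show "x = y" using xy m[of x] m[of y] S xy(1,2) by (auto split: if_splits)
qed

lemma good_j:
  fixes p :: nat and S :: "int set" and u v :: "'n::finite \<Rightarrow> int"
  assumes p: "prime p" and S: "S \<subseteq> {1..int p}"
   and bound: "CARD('n) * (p - card S) < p - 1"
   and u: "\<And>i. u i mod int p \<in> (\<lambda>s. s mod int p) ` S"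
  shows "\<exists>j::int. 1 \<le> j \<and> j \<le> int p - 1 \<and> (\<forall>i. (u i + j * v i) mod int p \<in> (\<lambda>s. s mod int p) ` S)"
proof -
  define R where "R = (\<lambda>s. s mod int p) ` S"
  have p0: "p > 0" using p prime_gt_0_nat by blast
  have fS: "finite S" using S finite_subset by blast
  have cR: "card R = card S" unfolding R_def using card_image[OF mod_inj_S[OF p0 S]] .
  have R0: "R \<subseteq> {0..<int p}" unfolding R_def using p0 by auto
  have cc: "card ({0..<int p} - R) = p - card S"
    using card_Diff_subset[OF finite_subset[OF R0] R0] cR by simp
  define B where "B i = {j \<in> {1..int p - 1}. (u i + j * v i) mod int p \<notin> R}" for i
  have cB: "card (B i) \<le> p - card S" for i
  proof (cases "int p dvd v i")
    case True
    obtain k where k: "v i = int p * k" using True by (elim dvdE)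
    have "(u i + j * v i) mod int p = u i mod int p" for j
    proof -
      have "(u i + j * v i) mod int p = (u i + (j*k) * int p) mod int p" by (simp add: k ac_simps)
      also have "\<dots> = u i mod int p" by (rule mod_mult_self1)
      finally show ?thesis .
    qed
    then have "B i = {}" unfolding B_def using u R_def by auto
    then show ?thesis by simp
  next
    case False
    define f where "f j = (u i + j * v i) mod int p" for j
    have inj: "inj_on f (B i)"
    proof (rule inj_onI)
      fix j1 j2 assume j: "j1 \<in> B i" "j2 \<in> B i" "f j1 = f j2"
      then have "int p dvd (u i + j1 * v i) - (u i + j2 * v i)" unfolding f_def using mod_eq_dvd_iff by blast
      moreover have "(u i + j1 * v i) - (u i + j2 * v i) = (j1 - j2) * v i" by (simp add: algebra_simps)
      ultimately have "int p dvd (j1 - j2) * v i" by simp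
      moreover have "prime (int p)" using p by simp
      ultimately have "int p dvd (j1 - j2)" using False prime_dvd_mult_iff by blast
      moreover have "\<bar>j1 - j2\<bar> < int p" using j(1,2) unfolding B_def by auto
      ultimately show "j1 = j2"
      proof -
        assume d: "int p dvd (j1 - j2)" and l: "\<bar>j1 - j2\<bar> < int p"
        show "j1 = j2"
        proof (rule ccontr)
          assume "j1 \<noteq> j2"
          then have "int p \<le> \<bar>j1 - j2\<bar>" using dvd_imp_le_int[OF _ d] by simp
          then show False using l by simp
        qed
      qed
    qed
    have "f ` B i \<subseteq> {0..<int p} - R" unfolding B_def f_def using p0 by auto
    from card_inj_on_le[OF inj this] cc show ?thesis by simp
  qed
  have "card (\<Union>i. B i) \<le> (\<Sum>i\<in>UNIV. card (B i))" using card_UN_le[of UNIV B] by simp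
  also have "\<dots> \<le> (\<Sum>i\<in>(UNIV::'n set). p - card S)" by (rule sum_mono) (rule cB)
  also have "\<dots> = CARD('n) * (p - card S)" by simp
  also have "\<dots> < p - 1" by (rule bound)
  also have "p - 1 = card {1..int p - 1}" by simp
  finally have "card (\<Union>i. B i) < card {1..int p - 1}" .
  have "\<not> {1..int p - 1} \<subseteq> (\<Union>i. B i)"
  proof
    assume sub: "{1..int p - 1} \<subseteq> (\<Union>i. B i)"
    have fB: "finite (B i)" for i unfolding B_def by (rule finite_subset[of _ "{1..int p - 1}"]) auto
    have "finite (\<Union>i. B i)" using fB by simp
    from card_mono[OF this sub] show False using \<open>card (\<Union>i. B i) < card {1..int p - 1}\<close> by simp
  qed
  then obtain j where "j \<in> {1..int p - 1}" "j \<notin> (\<Union>i. B i)" by blast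
  then show ?thesis unfolding B_def R_def by auto
qed



lemma A_mem_D:
  fixes p :: nat
  assumes "x \<in> {real_of_int (s + int p * n) | s n. s \<in> S}"
  shows "x = of_int \<lfloor>x\<rfloor> \<and> \<lfloor>x\<rfloor> mod int p \<in> (\<lambda>s. s mod int p) ` S"
proof -
  obtain s n where sn: "x = real_of_int (s + int p * n)" "s \<in> S" using assms by blast
  have "\<lfloor>x\<rfloor> = s + int p * n" unfolding sn(1) by (rule floor_of_int)
  moreover have "(s + int p * n) mod int p = s mod int p" by simp
  ultimately show ?thesis using sn by auto
qed

lemma A_mem_I:
  fixes p :: nat and z :: int
  assumes "z mod int p \<in> (\<lambda>s. s mod int p) ` S"
  shows "real_of_int z \<in> {real_of_int (s + int p * n) | s n. s \<in> S}"
proof -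
  obtain s where s: "s \<in> S" "z mod int p = s mod int p" using assms by auto
  then have "int p dvd z - s" using mod_eq_dvd_iff by blast
  then obtain n where "z - s = int p * n" by (elim dvdE)
  then have "z = s + int p * n" by simp
  then show ?thesis using s(1) by blast
qed

lemma finite_int_points:
  fixes P :: "(real^'n) set"
  assumes "bounded P"
  shows "finite (P \<inter> cart_power {real_of_int (s + int p * n) | s n. s \<in> S})"
proof -
  obtain b where b: "b > 0" "\<And>x. x \<in> P \<Longrightarrow> norm x \<le> b" using assms bounded_pos by blast
  define N where "N = {-\<lceil>b\<rceil>..\<lceil>b\<rceil>}"
  have sub: "P \<inter> cart_power {real_of_int (s + int p * n) | s n. s \<in> S}
      \<subseteq> (\<lambda>f. \<chi> i. real_of_int (f i)) ` PiE UNIV (\<lambda>_. N)"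
  proof
    fix x assume x: "x \<in> P \<inter> cart_power {real_of_int (s + int p * n) | s n. s \<in> S}"
    have xi: "x $ i = of_int \<lfloor>x $ i\<rfloor>" for i
      using A_mem_D x unfolding cart_power_def by blast
    have "\<bar>x $ i\<bar> \<le> b" for i using component_le_norm_cart[of x i] b(2) x by force
    then have "\<lfloor>x $ i\<rfloor> \<in> N" for i
    proof -
      have h: "x $ i \<le> b" "- x $ i \<le> b" using \<open>\<bar>x $ i\<bar> \<le> b\<close> by auto
      have c: "b \<le> of_int \<lceil>b\<rceil>" by (rule le_of_int_ceiling)
      have "- real_of_int \<lceil>b\<rceil> \<le> x $ i" using h c by linarith
      then have "of_int (- \<lceil>b\<rceil>) \<le> x $ i" by simp
      then have "- \<lceil>b\<rceil> \<le> \<lfloor>x $ i\<rfloor>" by (simp only: le_floor_iff)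
      moreover have "\<lfloor>x $ i\<rfloor> \<le> \<lceil>b\<rceil>" using h c by (meson floor_le_ceiling ceiling_mono order_trans)
      ultimately show ?thesis unfolding N_def by simp
    qed
    then have "(\<lambda>i. \<lfloor>x $ i\<rfloor>) \<in> PiE UNIV (\<lambda>_. N)" by auto
    moreover have "x = (\<chi> i. real_of_int \<lfloor>x $ i\<rfloor>)" using xi by (simp add: vec_eq_iff)
    ultimately show "x \<in> (\<lambda>f. \<chi> i. real_of_int (f i)) ` PiE UNIV (\<lambda>_. N)"
      by (intro image_eqI[where x="\<lambda>i. \<lfloor>x $ i\<rfloor>"]) simp_all
  qed
  have "finite (PiE (UNIV::'n set) (\<lambda>_. N))" unfolding N_def by (rule finite_PiE) auto
  then show ?thesis using sub finite_subset by blast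
qed

lemma Q_lemma:
  fixes P :: "(real^'n) set" and p :: nat and S :: "int set"
  defines "X \<equiv> cart_power {real_of_int (s + int p * n) | s n. s \<in> S} :: (real^'n) set"
  assumes p: "prime p" and S: "S \<subseteq> {1..int p}"
   and bound: "CARD('n) * (p - card S) < p - 1"
   and P: "convex P" and Z: "Z \<subseteq> P \<inter> X" and cZ: "card S ^ CARD('n) < card Z"
  shows "\<exists>z1\<in>Z. \<exists>z2\<in>Z. z1 \<noteq> z2 \<and>
            (\<exists>\<theta>. 0 < \<theta> \<and> \<theta> < 1 \<and> (1 - \<theta>) *\<^sub>R z1 + \<theta> *\<^sub>R z2 \<in> P \<inter> X)"
proof -
  define R where "R = (\<lambda>s. s mod int p) ` S"
  have p0: "p > 0" using p prime_gt_0_nat by blast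
  have fS: "finite S" using S finite_subset by blast
  have cR: "card R = card S" unfolding R_def using card_image[OF mod_inj_S[OF p0 S]] .
  have fR: "finite R" unfolding R_def using fS by simp
  define r where "r z = (\<lambda>i. \<lfloor>z $ i\<rfloor> mod int p)" for z :: "real^'n"
  have memX: "z $ i = of_int \<lfloor>z $ i\<rfloor> \<and> \<lfloor>z $ i\<rfloor> mod int p \<in> R" if "z \<in> X" for z i
    using A_mem_D that unfolding X_def cart_power_def R_def by blast
  have rZ: "r ` Z \<subseteq> PiE UNIV (\<lambda>_. R)" using Z memX unfolding r_def by auto
  have cPi: "card (PiE (UNIV::'n set) (\<lambda>_. R)) = card S ^ CARD('n)"
    by (simp add: card_PiE cR)
  have "\<not> inj_on r Z"
  proof
    assume "inj_on r Z"
    from card_inj_on_le[OF this rZ] have "card Z \<le> card S ^ CARD('n)"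
      using cPi fR by (simp add: finite_PiE)
    then show False using cZ by simp
  qed
  then obtain z1 z2 where z: "z1 \<in> Z" "z2 \<in> Z" "z1 \<noteq> z2" "r z1 = r z2"
    unfolding inj_on_def by blast
  have z1X: "z1 \<in> X" and z2X: "z2 \<in> X" and z1P: "z1 \<in> P" and z2P: "z2 \<in> P" using z Z by auto
  define u where "u i = \<lfloor>z1 $ i\<rfloor>" for i
  define v where "v i = (\<lfloor>z2 $ i\<rfloor> - \<lfloor>z1 $ i\<rfloor>) div int p" for i
  have dv: "\<lfloor>z2 $ i\<rfloor> - \<lfloor>z1 $ i\<rfloor> = int p * v i" for i
  proof -
    have "\<lfloor>z2 $ i\<rfloor> mod int p = \<lfloor>z1 $ i\<rfloor> mod int p" using z(4) unfolding r_def by metis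
    then have "int p dvd \<lfloor>z2 $ i\<rfloor> - \<lfloor>z1 $ i\<rfloor>" using mod_eq_dvd_iff by blast
    then show ?thesis unfolding v_def by simp
  qed
  have u: "u i mod int p \<in> (\<lambda>s. s mod int p) ` S" for i using memX[OF z1X] unfolding u_def R_def by blast
  obtain j where j: "1 \<le> j" "j \<le> int p - 1" and jR: "\<And>i. (u i + j * v i) mod int p \<in> (\<lambda>s. s mod int p) ` S"
    using good_j[where u=u and v=v, OF p S bound u] by blast
  define \<theta> where "\<theta> = real_of_int j / real p"
  have th: "0 < \<theta>" "\<theta> < 1" unfolding \<theta>_def using j p0 by (auto simp: field_simps)
  define w where "w = (1 - \<theta>) *\<^sub>R z1 + \<theta> *\<^sub>R z2"
  have "w $ i = of_int (u i + j * v i)" for i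
  proof -
    have "w $ i = z1 $ i + \<theta> * (z2 $ i - z1 $ i)" unfolding w_def by (simp add: algebra_simps)
    also have "z2 $ i - z1 $ i = of_int (int p * v i)"
      using memX[OF z1X, of i] memX[OF z2X, of i] dv[of i] by (metis of_int_diff)
    also have "\<theta> * of_int (int p * v i) = of_int (j * v i)" unfolding \<theta>_def using p0 by simp
    finally show ?thesis using memX[OF z1X, of i] unfolding u_def by simp
  qed
  then have "w \<in> X" unfolding X_def cart_power_def using A_mem_I[OF jR] by simp
  moreover have "w \<in> P" unfolding w_def using convexD[OF P z1P z2P] th by simp
  ultimately show ?thesis using z th unfolding w_def by blast
qed


lemma helly_main:
  fixes p :: nat and S :: "int set"
  defines "X \<equiv> cart_power {real_of_int (s + int p * n) | s n. s \<in> S} :: (real^'n) set"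
  assumes p: "prime p" and S: "S \<subseteq> {1..int p}"
   and bound: "CARD('n) * (p - card S) < p - 1"
  shows "helly_prop X (card S ^ CARD('n))"
  unfolding helly_prop_def
proof (intro allI impI)
  fix F :: "(real^'n) set set"
  assume F: "finite F \<and> (\<forall>C\<in>F. convex C)"
    and hyp: "\<forall>G. G \<subseteq> F \<and> card G \<le> card S ^ CARD('n) \<longrightarrow> \<Inter> G \<inter> X \<noteq> {}"
  define k where "k = card S ^ CARD('n)"
  show "\<Inter> F \<inter> X \<noteq> {}"
  proof
    assume nF: "\<Inter> F \<inter> X = {}"
    define bad where "bad G \<longleftrightarrow> G \<subseteq> F \<and> \<Inter> G \<inter> X = {}" for G
    define n where "n = (LEAST n. \<exists>G. bad G \<and> card G = n)"
    have "\<exists>G. bad G \<and> card G = n" unfolding n_def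
      by (rule LeastI_ex) (use nF in \<open>auto simp: bad_def\<close>)
    then obtain F' where bF': "bad F'" and cF': "card F' = n" by blast
    have minF: "\<not> bad G" if "card G < n" for G
      using not_less_Least[OF that[unfolded n_def]] by blast
    have F'F: "F' \<subseteq> F" and F'X: "\<Inter> F' \<inter> X = {}" using bF' unfolding bad_def by auto
    have fF': "finite F'" using F'F F finite_subset by blast
    have convF': "\<And>C. C \<in> F' \<Longrightarrow> convex C" using F F'F by auto
    have kF': "k < card F'"
    proof (rule ccontr)
      assume "\<not> k < card F'"
      then show False using hyp F'F F'X unfolding k_def by auto
    qed
    have "\<exists>x. x \<in> \<Inter> (F' - {C}) \<and> x \<in> X" if CF: "C \<in> F'" for C
    proof -
      have "card (F' - {C}) < n" using cF' fF' CF card_gt_0_iff[of F'] by auto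
      then have "\<not> bad (F' - {C})" by (rule minF)
      then show ?thesis using F'F unfolding bad_def by auto
    qed
    then obtain xf where xf1: "\<And>C. C \<in> F' \<Longrightarrow> xf C \<in> \<Inter> (F' - {C})"
       and xf2: "\<And>C. C \<in> F' \<Longrightarrow> xf C \<in> X" by metis
    define P where "P = convex hull (xf ` F')"
    have cP: "convex P" unfolding P_def by simp
    have bP: "bounded P" unfolding P_def
      by (rule compact_imp_bounded, rule finite_imp_compact_convex_hull) (use fF' in simp)
    define T where "T = P \<inter> X"
    have fT: "finite T" unfolding T_def X_def by (rule finite_int_points[OF bP])
    have xfT: "xf C \<in> T" if "C \<in> F'" for C
      using xf2[OF that] hull_subset[of "xf ` F'" convex] that unfolding T_def P_def by auto
    have "\<exists>C a b. C \<in> F' \<and> t \<notin> C \<and> a \<bullet> t < b \<and> (\<forall>y\<in>C \<inter> T. b < a \<bullet> y)" if tT: "t \<in> T" for t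
    proof -
      have "t \<in> X" using tT unfolding T_def by auto
      then obtain C where C: "C \<in> F'" "t \<notin> C" using F'X by auto
      define K where "K = convex hull (C \<inter> T)"
      have KC: "K \<subseteq> C" unfolding K_def by (rule hull_minimal) (use convF'[OF C(1)] in auto)
      have "compact K" unfolding K_def by (rule finite_imp_compact_convex_hull) (use fT in auto)
      then have "closed K" by (rule compact_imp_closed)
      moreover have "convex K" unfolding K_def by simp
      moreover have "t \<notin> K" using KC C by auto
      ultimately obtain a b where ab: "a \<bullet> t < b" "\<forall>x\<in>K. b < a \<bullet> x"
        using separating_hyperplane_closed_point by blast
      have "C \<inter> T \<subseteq> K" unfolding K_def by (rule hull_subset)
      then show ?thesis using ab C by blast
    qed
    then obtain Cf A B where CAB: "\<And>t. t \<in> T \<Longrightarrow> Cf t \<in> F' \<and> t \<notin> Cf t \<and> A t \<bullet> t < B t \<and> (\<forall>y\<in>Cf t \<inter> T. B t < A t \<bullet> y)"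
      by metis
    have small: "\<exists>y\<in>T. \<forall>j\<in>U. (- A j) \<bullet> y < - B j" if U: "U \<subseteq> T" "card U \<le> k" for U
    proof -
      have fU: "finite U" using U fT finite_subset by blast
      have "\<not> F' \<subseteq> Cf ` U"
      proof
        assume "F' \<subseteq> Cf ` U"
        then have "card F' \<le> card (Cf ` U)" using fU by (simp add: card_mono)
        also have "\<dots> \<le> card U" using fU by (rule card_image_le)
        finally show False using U(2) kF' by simp
      qed
      then obtain C0 where C0: "C0 \<in> F'" "C0 \<notin> Cf ` U" by blast
      have "\<forall>j\<in>U. (- A j) \<bullet> xf C0 < - B j"
      proof
        fix j assume jU: "j \<in> U"
        then have jT: "j \<in> T" using U by auto
        have "Cf j \<in> F' - {C0}" using CAB[OF jT] C0 jU by auto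
        then have "xf C0 \<in> Cf j" using xf1[OF C0(1)] by blast
        then have "B j < A j \<bullet> xf C0" using CAB[OF jT] xfT[OF C0(1)] by blast
        then show "(- A j) \<bullet> xf C0 < - B j" by simp
      qed
      then show ?thesis using xfT[OF C0(1)] by blast
    qed
    have Q: "\<exists>z1\<in>Z. \<exists>z2\<in>Z. z1 \<noteq> z2 \<and>
            (\<exists>\<theta>. 0 < \<theta> \<and> \<theta> < 1 \<and> (1 - \<theta>) *\<^sub>R z1 + \<theta> *\<^sub>R z2 \<in> T)"
      if "Z \<subseteq> T" "k < card Z" for Z
      using Q_lemma[OF p S bound cP, of Z] that unfolding T_def X_def k_def by blast
    from bell2[OF fT fT small Q] obtain y where yT: "y \<in> T" and yall: "\<forall>j\<in>T. (- A j) \<bullet> y < - B j"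
      by blast
    have "A y \<bullet> y < B y" using CAB[OF yT] by blast
    moreover have "B y < A y \<bullet> y" using yall yT by auto
    ultimately show False by simp
  qed
qed

theorem corollary4:
  fixes p :: nat and S :: "int set" and \<alpha> :: real
  assumes "prime p"
    and "\<alpha> > 1 - (1 / real CARD('n)) * (1 - 1 / real p)"
    and "S \<subseteq> {1..int p}"
    and "real (card S) \<ge> \<alpha> * real p"
  shows "helly_number (cart_power {real_of_int (s + int p * n) | s n. s \<in> S} :: (real^'n) set)
           \<le> enat (card S ^ CARD('n))"
proof -
  define d where "d = real CARD('n)"
  have d1: "d \<ge> 1" unfolding d_def by simp
  have p2: "p \<ge> 2" using assms(1) prime_ge_2_nat by blast
  have cSp: "card S \<le> p"
    using card_mono[OF finite_atLeastAtMost_int assms(3)] by simp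
  have "\<alpha> * real p > (1 - (1 / d) * (1 - 1 / real p)) * real p"
    using assms(2) p2 unfolding d_def by (intro mult_strict_right_mono) auto
  also have "(1 - (1 / d) * (1 - 1 / real p)) * real p = real p - (real p - 1) / d"
    using p2 d1 by (simp add: field_simps)
  finally have "real (card S) > real p - (real p - 1) / d" using assms(4) by linarith
  then have "d * real (card S) > d * (real p - (real p - 1) / d)"
    using d1 by (intro mult_strict_left_mono) auto
  also have "d * (real p - (real p - 1) / d) = d * real p - (real p - 1)"
    using d1 by (simp add: field_simps)
  finally have "d * (real p - real (card S)) < real p - 1" by (simp add: algebra_simps)
  then have "real (CARD('n) * (p - card S)) < real (p - 1)"
    using cSp p2 unfolding d_def by (simp add: of_nat_diff)
  then have bound: "CARD('n) * (p - card S) < p - 1" by (simp only: of_nat_less_iff)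
  have "helly_prop (cart_power {real_of_int (s + int p * n) | s n. s \<in> S} :: (real^'n) set) (card S ^ CARD('n))"
    by (rule helly_main[OF assms(1) assms(3) bound])
  then show ?thesis unfolding helly_number_def by (intro INF_lower) simp
qed

end
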